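(* Let $(X,\mathcal{M},\mu)$ be a measure space and $\Phi$ an $N^*$-function for which there is a constant $k\ge2$ with $\Phi(kx)=2\Phi(x)$ for all $x>0$. Then $\|f\|_\Phi=\inf\{\lambda>0:\int_X\Phi(|f|/\lambda)\,d\mu\le1\}$ is a quasi-norm on $L_\Phi(X)$: $\|f\|_\Phi=0$ iff $f=0$, $\|\alpha f\|_\Phi=|\alpha|\,\|f\|_\Phi$ for $\alpha\in\mathbb{R}$, and $\|f+g\|_\Phi\le k(\|f\|_\Phi+\|g\|_\Phi)$ for all $f,g\in L_\Phi(X)$.
   Context: An $N^*$-function is a function $\Phi:\mathbb{R}\to\mathbb{R}$ of the form $\Phi(x)=\int_0^{|x|}p(t)\,dt<+\infty$ for all $x$, where $p:[0,\infty)\to[0,\infty]$ is right-continuous, positive on $(0,\infty)$, non-increasing, and satisfies $\lim_{t\to0^+}p(t)=+\infty$ and $\lim_{t\to+\infty}p(t)=0$. $L_\Phi(X)$ is the space of (classes modulo a.e. equality of) measurable $f:X\to\mathbb{R}$ with $\int_X\Phi(f)\,d\mu<\infty$. *)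

theory Defs
  imports "HOL-Analysis.Analysis"
begin

text \<open>N*-function: Phi x = integral of p over [0,|x|], finite, where the density p
  is positive, non-increasing and right-continuous on (0,inf), tends to +inf at 0+
  and to 0 at +inf. (p(0) is forced to be +inf by monotonicity; a single point
  does not affect the integral, so p is modelled as a real-valued function whose
  value at 0 is irrelevant.)\<close>
definition N_star_function :: "(real \<Rightarrow> real) \<Rightarrow> bool" where
  "N_star_function Phi \<longleftrightarrow>
    (\<exists>p :: real \<Rightarrow> real.
       (\<forall>t>0. p t > 0) \<and>
       (\<forall>s t. 0 < s \<longrightarrow> s \<le> t \<longrightarrow> p t \<le> p s) \<and>
       (\<forall>t>0. (p \<longlongrightarrow> p t) (at_right t)) \<and>
       filterlim p at_top (at_right 0) \<and>
       (p \<longlongrightarrow> 0) at_top \<and>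
       (\<forall>x. (\<integral>\<^sup>+ t\<in>{0..\<bar>x\<bar>}. ennreal (p t) \<partial>lborel) < \<infinity> \<and>
            Phi x = enn2real (\<integral>\<^sup>+ t\<in>{0..\<bar>x\<bar>}. ennreal (p t) \<partial>lborel)))"

text \<open>Orlicz class L_Phi(X): measurable real functions with finite Phi-integral
  (equivalence modulo a.e. equality is handled in the statement by using AE).\<close>
definition L_Phi :: "'a measure \<Rightarrow> (real \<Rightarrow> real) \<Rightarrow> ('a \<Rightarrow> real) set" where
  "L_Phi M Phi = {f. f \<in> borel_measurable M \<and> (\<integral>\<^sup>+ x. ennreal (Phi (f x)) \<partial>M) < \<infinity>}"

definition orlicz_norm :: "'a measure \<Rightarrow> (real \<Rightarrow> real) \<Rightarrow> ('a \<Rightarrow> real) \<Rightarrow> real" where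
  "orlicz_norm M Phi f =
     Inf {l::real. l > 0 \<and> (\<integral>\<^sup>+ x. ennreal (Phi (\<bar>f x\<bar> / l)) \<partial>M) \<le> 1}"

end

theory Submission
  imports Defs
begin

lemma phi_props:
  assumes "N_star_function Phi"
  shows "\<And>x. Phi x = Phi \<bar>x\<bar>" "Phi 0 = 0" "\<And>x y. 0 \<le> x \<Longrightarrow> x \<le> y \<Longrightarrow> Phi x \<le> Phi y"
        "\<And>x. x > 0 \<Longrightarrow> Phi x > 0" "\<And>x. Phi x \<ge> 0"
proof -
  obtain p :: "real \<Rightarrow> real" where pp: "\<forall>t>0. p t > 0"
    "\<forall>s t. 0 < s \<longrightarrow> s \<le> t \<longrightarrow> p t \<le> p s"
    and I: "\<forall>x. (\<integral>\<^sup>+ t\<in>{0..\<bar>x\<bar>}. ennreal (p t) \<partial>lborel) < \<infinity> \<and>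
            Phi x = enn2real (\<integral>\<^sup>+ t\<in>{0..\<bar>x\<bar>}. ennreal (p t) \<partial>lborel)"
    using assms unfolding N_star_function_def by blast
  show "\<And>x. Phi x = Phi \<bar>x\<bar>" using I by simp
  show "\<And>x. Phi x \<ge> 0" using I by simp
  have "(\<integral>\<^sup>+ t\<in>{0..\<bar>0::real\<bar>}. ennreal (p t) \<partial>lborel) = (\<integral>\<^sup>+ (t::real). 0 \<partial>lborel)"
    by (rule nn_integral_cong_AE) (use AE_lborel_singleton[of "0::real"] in \<open>auto elim!: eventually_mono simp: indicator_def\<close>)
  then show "Phi 0 = 0" using I by simp
  show "Phi x \<le> Phi y" if "0 \<le> x" "x \<le> y" for x y
  proof -
    have "(\<integral>\<^sup>+ t\<in>{0..\<bar>x\<bar>}. ennreal (p t) \<partial>lborel) \<le> (\<integral>\<^sup>+ t\<in>{0..\<bar>y\<bar>}. ennreal (p t) \<partial>lborel)"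
      using that by (intro nn_integral_mono) (auto simp: indicator_def)
    then show ?thesis using I[rule_format, of y] I[rule_format, of x] by (simp add: enn2real_mono)
  qed
  show "Phi x > 0" if "x > 0" for x
  proof -
    have "ennreal (p x) * ennreal x = (\<integral>\<^sup>+ t. ennreal (p x) * indicator {0<..x} t \<partial>lborel)"
      using that by (simp add: nn_integral_cmult_indicator)
    also have "\<dots> \<le> (\<integral>\<^sup>+ t\<in>{0..\<bar>x\<bar>}. ennreal (p t) \<partial>lborel)"
      using that pp(2) by (intro nn_integral_mono) (auto simp: indicator_def intro!: ennreal_leI)
    finally have "0 < (\<integral>\<^sup>+ t\<in>{0..\<bar>x\<bar>}. ennreal (p t) \<partial>lborel)"
      using that pp(1) by (metis ennreal_eq_0_iff ennreal_mult'' less_le not_gr_zero not_le order_less_le_trans zero_less_mult_iff)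
    then show ?thesis using I[rule_format, of x] by (simp add: enn2real_positive_iff)
  qed
qed

locale orl =
  fixes Phi :: "real \<Rightarrow> real" and k :: real
  assumes ev: "\<And>x. Phi x = Phi \<bar>x\<bar>" and z: "Phi 0 = 0"
    and mo: "\<And>x y. 0 \<le> x \<Longrightarrow> x \<le> y \<Longrightarrow> Phi x \<le> Phi y"
    and pos: "\<And>x. x > 0 \<Longrightarrow> Phi x > 0" and nn: "\<And>x. Phi x \<ge> 0"
    and k2: "k \<ge> 2" and sc: "\<forall>x>0. Phi (k * x) = 2 * Phi x"
begin

lemma meas[measurable]: "Phi \<in> borel_measurable borel"
proof -
  have "mono (\<lambda>x. Phi (max 0 x))" by (intro monoI mo) auto
  then have "(\<lambda>x. Phi (max 0 x)) \<in> borel_measurable borel" by (rule borel_measurable_mono)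
  then have "(\<lambda>x. Phi (max 0 \<bar>x\<bar>)) \<in> borel_measurable borel" by measurable
  moreover have "(\<lambda>x. Phi (max 0 \<bar>x\<bar>)) = Phi" using ev by (auto simp: max_def)
  ultimately show ?thesis by simp
qed

lemma sc0: "y \<ge> 0 \<Longrightarrow> Phi (k * y) = 2 * Phi y"
  using sc z k2 by (cases "y = 0") auto

lemma scpow: "y \<ge> 0 \<Longrightarrow> Phi (k ^ n * y) = 2 ^ n * Phi y"
proof (induction n)
  case 0 then show ?case by simp
next
  case (Suc n)
  have "k ^ Suc n * y = k * (k ^ n * y)" by simp
  moreover have "k ^ n * y \<ge> 0" using Suc k2 by simp
  ultimately show ?case using sc0[of "k ^ n * y"] Suc by (simp add: mult.assoc)
qed

lemma scdiv: "Phi (\<bar>y\<bar> / k ^ n) = Phi y / 2 ^ n"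
proof -
  have "Phi y = Phi (k ^ n * (\<bar>y\<bar> / k ^ n))" using ev k2 by simp
  also have "\<dots> = 2 ^ n * Phi (\<bar>y\<bar> / k ^ n)" using k2 by (intro scpow) simp
  finally show ?thesis by simp
qed

lemma max_ineq:
  assumes "a > 0" "b > 0"
  shows "Phi (\<bar>u + v\<bar> / (k * (a + b))) \<le> (Phi (\<bar>u\<bar> / a) + Phi (\<bar>v\<bar> / b)) / 2"
proof -
  define m where "m = max (\<bar>u\<bar> / a) (\<bar>v\<bar> / b)"
  have m0: "m \<ge> 0" unfolding m_def using assms by (simp add: le_max_iff_disj)
  have "\<bar>u\<bar> = a * (\<bar>u\<bar> / a)" "\<bar>v\<bar> = b * (\<bar>v\<bar> / b)" using assms by auto
  moreover have "a * (\<bar>u\<bar> / a) \<le> a * m" "b * (\<bar>v\<bar> / b) \<le> b * m"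
    unfolding m_def using assms by (intro mult_left_mono; simp)+
  ultimately have "\<bar>u\<bar> \<le> a * m" "\<bar>v\<bar> \<le> b * m" by linarith+
  then have "\<bar>u + v\<bar> \<le> (a + b) * m" by (simp add: algebra_simps)
  then have "\<bar>u + v\<bar> / (k * (a + b)) \<le> m / k" using assms k2
    by (simp add: divide_simps mult.commute mult.left_commute)
  then have 1: "Phi (\<bar>u + v\<bar> / (k * (a + b))) \<le> Phi (m / k)" using assms k2 by (intro mo) auto
  have "Phi m = 2 * Phi (m / k)" using sc0[of "m/k"] m0 k2 by simp
  moreover have "Phi m \<le> Phi (\<bar>u\<bar> / a) + Phi (\<bar>v\<bar> / b)"
    unfolding m_def using nn by (auto simp: max_def)
  ultimately show ?thesis using 1 by simp
qed


definition "SS M f = {l::real. l > 0 \<and> (\<integral>\<^sup>+ x. ennreal (Phi (\<bar>f x\<bar> / l)) \<partial>M) \<le> 1}"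

lemma norm_eq: "orlicz_norm M Phi f = Inf (SS M f)"
  unfolding orlicz_norm_def SS_def by simp

lemma bdd: "bdd_below (SS M f)"
  unfolding SS_def by (rule bdd_belowI[of _ 0]) auto

lemma up: "l \<in> SS M f \<Longrightarrow> l \<le> l' \<Longrightarrow> l' \<in> SS M f"
proof -
  assume a: "l \<in> SS M f" "l \<le> l'"
  then have l: "0 < l" "l \<le> l'" "(\<integral>\<^sup>+ x. ennreal (Phi (\<bar>f x\<bar> / l)) \<partial>M) \<le> 1"
    unfolding SS_def by auto
  have "(\<integral>\<^sup>+ x. ennreal (Phi (\<bar>f x\<bar> / l')) \<partial>M) \<le> (\<integral>\<^sup>+ x. ennreal (Phi (\<bar>f x\<bar> / l)) \<partial>M)"
    using l by (intro nn_integral_mono ennreal_leI mo) (auto intro: divide_left_mono)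
  with l show "l' \<in> SS M f" unfolding SS_def by simp
qed

lemma int_scdiv:
  assumes "f \<in> borel_measurable M"
  shows "(\<integral>\<^sup>+ x. ennreal (Phi (\<bar>f x\<bar> / k ^ n)) \<partial>M) = (\<integral>\<^sup>+ x. ennreal (Phi (f x)) \<partial>M) * ennreal (1 / 2 ^ n)"
proof -
  have "(\<integral>\<^sup>+ x. ennreal (Phi (\<bar>f x\<bar> / k ^ n)) \<partial>M) = (\<integral>\<^sup>+ x. ennreal (Phi (f x)) * ennreal (1 / 2 ^ n) \<partial>M)"
    using nn by (intro nn_integral_cong) (simp add: scdiv ennreal_mult'' [symmetric])
  also have "\<dots> = (\<integral>\<^sup>+ x. ennreal (Phi (f x)) \<partial>M) * ennreal (1 / 2 ^ n)"
    using assms by (intro nn_integral_multc) measurable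
  finally show ?thesis .
qed

lemma int_scmul:
  assumes "f \<in> borel_measurable M"
  shows "(\<integral>\<^sup>+ x. ennreal (Phi (\<bar>f x\<bar> / (1 / k ^ n))) \<partial>M) = (\<integral>\<^sup>+ x. ennreal (Phi (f x)) \<partial>M) * ennreal (2 ^ n)"
proof -
  have "(\<integral>\<^sup>+ x. ennreal (Phi (\<bar>f x\<bar> / (1 / k ^ n))) \<partial>M) = (\<integral>\<^sup>+ x. ennreal (Phi (f x)) * ennreal (2 ^ n) \<partial>M)"
  proof (intro nn_integral_cong)
    fix x
    have "Phi (\<bar>f x\<bar> / (1 / k ^ n)) = Phi (k ^ n * \<bar>f x\<bar>)" by (simp add: mult.commute)
    also have "\<dots> = 2 ^ n * Phi (f x)" using scpow[of "\<bar>f x\<bar>" n] ev by simp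
    finally show "ennreal (Phi (\<bar>f x\<bar> / (1 / k ^ n))) = ennreal (Phi (f x)) * ennreal (2 ^ n)"
      using nn by (simp add: ennreal_mult'' [symmetric] mult.commute)
  qed
  also have "\<dots> = (\<integral>\<^sup>+ x. ennreal (Phi (f x)) \<partial>M) * ennreal (2 ^ n)"
    using assms by (intro nn_integral_multc) measurable
  finally show ?thesis .
qed

lemma nonempty:
  assumes "f \<in> L_Phi M Phi"
  shows "SS M f \<noteq> {}"
proof -
  have fm: "f \<in> borel_measurable M" and fin: "(\<integral>\<^sup>+ x. ennreal (Phi (f x)) \<partial>M) < \<infinity>"
    using assms unfolding L_Phi_def by auto
  obtain c where c: "(\<integral>\<^sup>+ x. ennreal (Phi (f x)) \<partial>M) = ennreal c" "c \<ge> 0"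
    using fin by (cases "(\<integral>\<^sup>+ x. ennreal (Phi (f x)) \<partial>M)") auto
  obtain n :: nat where n: "c < 2 ^ n" using real_arch_pow[of 2 c] by auto
  have "(\<integral>\<^sup>+ x. ennreal (Phi (\<bar>f x\<bar> / k ^ n)) \<partial>M) = ennreal c * ennreal (1 / 2 ^ n)"
    using c by (simp add: int_scdiv[OF fm])
  also have "\<dots> = ennreal (c * (1 / 2 ^ n))" using c by (subst ennreal_mult[symmetric]) auto
  also have "\<dots> \<le> 1" using n by (simp add: field_simps)
  finally have "k ^ n \<in> SS M f" unfolding SS_def using k2 by simp
  then show ?thesis by auto
qed


lemma zero:
  assumes "f \<in> L_Phi M Phi"
  shows "Inf (SS M f) = 0 \<longleftrightarrow> (AE x in M. f x = 0)"
proof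
  assume ae: "AE x in M. f x = 0"
  have "SS M f = {0<..}"
  proof -
    have "(\<integral>\<^sup>+ x. ennreal (Phi (\<bar>f x\<bar> / l)) \<partial>M) = (\<integral>\<^sup>+ x. 0 \<partial>M)" for l
      by (rule nn_integral_cong_AE) (use ae in \<open>auto elim!: eventually_mono simp: z\<close>)
    then show ?thesis unfolding SS_def by auto
  qed
  then show "Inf (SS M f) = 0" by simp
next
  assume i0: "Inf (SS M f) = 0"
  have fm: "f \<in> borel_measurable M" and fin: "(\<integral>\<^sup>+ x. ennreal (Phi (f x)) \<partial>M) < \<infinity>"
    using assms unfolding L_Phi_def by auto
  obtain c where c: "(\<integral>\<^sup>+ x. ennreal (Phi (f x)) \<partial>M) = ennreal c" "c \<ge> 0"
    using fin by (cases "(\<integral>\<^sup>+ x. ennreal (Phi (f x)) \<partial>M)") auto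
  have cn: "c * 2 ^ n \<le> 1" for n :: nat
  proof -
    have "0 < 1 / k ^ n" using k2 by simp
    then obtain l where l: "l \<in> SS M f" "l < 1 / k ^ n"
      using cInf_lessD[OF nonempty[OF assms]] i0 by metis
    then have "1 / k ^ n \<in> SS M f" by (intro up[OF l(1)]) simp
    then have "(\<integral>\<^sup>+ x. ennreal (Phi (\<bar>f x\<bar> / (1 / k ^ n))) \<partial>M) \<le> 1"
      by (simp only: SS_def mem_Collect_eq)
    then have "(\<integral>\<^sup>+ x. ennreal (Phi (f x)) \<partial>M) * ennreal (2 ^ n) \<le> 1"
      by (simp only: int_scmul[OF fm])
    then have "ennreal (c * 2 ^ n) \<le> 1" using c by (simp add: ennreal_mult)
    then show ?thesis by (simp add: ennreal_le_1)
  qed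
  have "c = 0"
  proof (rule ccontr)
    assume "c \<noteq> 0"
    then have "c > 0" using c by simp
    obtain n :: nat where "1 / c < 2 ^ n" using real_arch_pow[of 2 "1/c"] by auto
    then have "1 < c * 2 ^ n" using \<open>c > 0\<close> by (simp add: field_simps)
    then show False using cn[of n] by simp
  qed
  then have "(\<integral>\<^sup>+ x. ennreal (Phi (f x)) \<partial>M) = 0" using c by simp
  then have "AE x in M. ennreal (Phi (f x)) = 0" using fm by (subst (asm) nn_integral_0_iff_AE) measurable
  then show "AE x in M. f x = 0"
  proof (rule eventually_mono)
    fix x assume "ennreal (Phi (f x)) = 0"
    then have "Phi (f x) \<le> 0" by (simp add: ennreal_eq_0_iff)
    then have "Phi \<bar>f x\<bar> \<le> 0" using ev by metis
    then show "f x = 0" using pos[of "\<bar>f x\<bar>"] by (cases "f x = 0") auto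
  qed
qed

lemma cInf_scale:
  fixes X :: "real set"
  assumes "X \<noteq> {}" "bdd_below X" "c > 0"
  shows "Inf ((\<lambda>l. c * l) ` X) = c * Inf X"
proof (rule antisym)
  show "c * Inf X \<le> Inf ((\<lambda>l. c * l) ` X)"
    using assms by (intro cInf_greatest) (auto intro: mult_left_mono cInf_lower)
  have "Inf ((\<lambda>l. c * l) ` X) / c \<le> Inf X"
  proof (intro cInf_greatest assms(1))
    fix x assume "x \<in> X"
    moreover have "bdd_below ((\<lambda>l. c * l) ` X)"
    proof -
      obtain m where "\<forall>x\<in>X. m \<le> x" using assms(2) unfolding bdd_below_def by blast
      then show ?thesis using assms(3) by (intro bdd_belowI[of _ "c * m"]) auto
    qed
    ultimately have "Inf ((\<lambda>l. c * l) ` X) \<le> c * x" by (intro cInf_lower) auto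
    then show "Inf ((\<lambda>l. c * l) ` X) / c \<le> x" using assms(3) by (simp add: field_simps)
  qed
  then show "Inf ((\<lambda>l. c * l) ` X) \<le> c * Inf X" using assms(3) by (simp add: field_simps)
qed

lemma homog:
  assumes "f \<in> L_Phi M Phi"
  shows "Inf (SS M (\<lambda>x. \<alpha> * f x)) = \<bar>\<alpha>\<bar> * Inf (SS M f)"
proof (cases "\<alpha> = 0")
  case True
  then have "SS M (\<lambda>x. \<alpha> * f x) = {0<..}" unfolding SS_def by (auto simp: z)
  then show ?thesis using True by simp
next
  case False
  have eq: "\<bar>\<alpha> * y\<bar> / l = \<bar>y\<bar> / (l / \<bar>\<alpha>\<bar>)" for y l using False by (simp add: abs_mult)
  have "SS M (\<lambda>x. \<alpha> * f x) = (\<lambda>l. \<bar>\<alpha>\<bar> * l) ` SS M f"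
  proof (intro set_eqI iffI)
    fix l assume "l \<in> SS M (\<lambda>x. \<alpha> * f x)"
    then have "l / \<bar>\<alpha>\<bar> \<in> SS M f" using False unfolding SS_def eq by simp
    then show "l \<in> (\<lambda>l. \<bar>\<alpha>\<bar> * l) ` SS M f" using False by (intro image_eqI[of _ _ "l / \<bar>\<alpha>\<bar>"]) auto
  next
    fix l assume "l \<in> (\<lambda>l. \<bar>\<alpha>\<bar> * l) ` SS M f"
    then obtain m where "m \<in> SS M f" "l = \<bar>\<alpha>\<bar> * m" by auto
    then show "l \<in> SS M (\<lambda>x. \<alpha> * f x)" using False unfolding SS_def eq by simp
  qed
  then show ?thesis using cInf_scale[OF nonempty[OF assms] bdd, of "\<bar>\<alpha>\<bar>"] False by simp
qed

lemma tri:
  assumes f: "f \<in> L_Phi M Phi" and g: "g \<in> L_Phi M Phi"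
  shows "Inf (SS M (\<lambda>x. f x + g x)) \<le> k * (Inf (SS M f) + Inf (SS M g))"
proof (rule field_le_epsilon)
  fix e :: real assume e: "e > 0"
  have fm: "f \<in> borel_measurable M" and gm: "g \<in> borel_measurable M"
    using f g unfolding L_Phi_def by auto
  obtain a where a: "a \<in> SS M f" "a < Inf (SS M f) + e / (2 * k)"
    using cInf_lessD[OF nonempty[OF f], of "Inf (SS M f) + e / (2 * k)"] e k2 by auto
  obtain b where b: "b \<in> SS M g" "b < Inf (SS M g) + e / (2 * k)"
    using cInf_lessD[OF nonempty[OF g], of "Inf (SS M g) + e / (2 * k)"] e k2 by auto
  have a0: "a > 0" "(\<integral>\<^sup>+ x. ennreal (Phi (\<bar>f x\<bar> / a)) \<partial>M) \<le> 1" using a unfolding SS_def by auto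
  have b0: "b > 0" "(\<integral>\<^sup>+ x. ennreal (Phi (\<bar>g x\<bar> / b)) \<partial>M) \<le> 1" using b unfolding SS_def by auto
  have "(\<integral>\<^sup>+ x. ennreal (Phi (\<bar>f x + g x\<bar> / (k * (a + b)))) \<partial>M)
      \<le> (\<integral>\<^sup>+ x. ennreal (Phi (\<bar>f x\<bar> / a)) * ennreal (1/2) + ennreal (Phi (\<bar>g x\<bar> / b)) * ennreal (1/2) \<partial>M)"
  proof (intro nn_integral_mono)
    fix x
    have "ennreal (Phi (\<bar>f x + g x\<bar> / (k * (a + b)))) \<le> ennreal ((Phi (\<bar>f x\<bar> / a) + Phi (\<bar>g x\<bar> / b)) / 2)"
      using max_ineq[OF a0(1) b0(1)] by (intro ennreal_leI)
    also have "\<dots> = ennreal (Phi (\<bar>f x\<bar> / a)) * ennreal (1/2) + ennreal (Phi (\<bar>g x\<bar> / b)) * ennreal (1/2)"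
    proof -
      have "(Phi (\<bar>f x\<bar> / a) + Phi (\<bar>g x\<bar> / b)) / 2 = Phi (\<bar>f x\<bar> / a) * (1/2) + Phi (\<bar>g x\<bar> / b) * (1/2)"
        by simp
      also have "ennreal \<dots> = ennreal (Phi (\<bar>f x\<bar> / a) * (1/2)) + ennreal (Phi (\<bar>g x\<bar> / b) * (1/2))"
        using nn by (intro ennreal_plus) simp_all
      also have "\<dots> = ennreal (Phi (\<bar>f x\<bar> / a)) * ennreal (1/2) + ennreal (Phi (\<bar>g x\<bar> / b)) * ennreal (1/2)"
        by (subst (1 2) ennreal_mult'') simp_all
      finally show ?thesis .
    qed
    finally show "ennreal (Phi (\<bar>f x + g x\<bar> / (k * (a + b)))) \<le> \<dots>" .
  qed
  also have "\<dots> = (\<integral>\<^sup>+ x. ennreal (Phi (\<bar>f x\<bar> / a)) \<partial>M) * ennreal (1/2) + (\<integral>\<^sup>+ x. ennreal (Phi (\<bar>g x\<bar> / b)) \<partial>M) * ennreal (1/2)"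
    using fm gm by (simp add: nn_integral_add nn_integral_multc)
  also have "\<dots> \<le> 1 * ennreal (1/2) + 1 * ennreal (1/2)"
    using a0(2) b0(2) by (intro add_mono mult_right_mono) auto
  also have "\<dots> = ennreal (1/2 + 1/2)" by (simp only: mult_1 ennreal_plus[symmetric])
  also have "\<dots> = 1" by simp
  finally have "k * (a + b) \<in> SS M (\<lambda>x. f x + g x)" unfolding SS_def using a0 b0 k2 by simp
  then have "Inf (SS M (\<lambda>x. f x + g x)) \<le> k * (a + b)" by (rule cInf_lower[OF _ bdd])
  also have "\<dots> \<le> k * (Inf (SS M f) + Inf (SS M g) + e / k)"
    using a b k2 by (intro mult_left_mono) (auto simp: field_simps)
  also have "\<dots> = k * (Inf (SS M f) + Inf (SS M g)) + e" using k2 by (simp add: field_simps)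
  finally show "Inf (SS M (\<lambda>x. f x + g x)) \<le> k * (Inf (SS M f) + Inf (SS M g)) + e" .
qed

end

theorem mainTheorem10:
  fixes M :: "'a measure" and Phi :: "real \<Rightarrow> real" and k :: real
  assumes "N_star_function Phi"
    and "k \<ge> 2"
    and "\<forall>x>0. Phi (k * x) = 2 * Phi x"
  shows "(\<forall>f\<in>L_Phi M Phi. orlicz_norm M Phi f = 0 \<longleftrightarrow> (AE x in M. f x = 0))
       \<and> (\<forall>f\<in>L_Phi M Phi. \<forall>\<alpha>::real.
            orlicz_norm M Phi (\<lambda>x. \<alpha> * f x) = \<bar>\<alpha>\<bar> * orlicz_norm M Phi f)
       \<and> (\<forall>f\<in>L_Phi M Phi. \<forall>g\<in>L_Phi M Phi.
            orlicz_norm M Phi (\<lambda>x. f x + g x)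
              \<le> k * (orlicz_norm M Phi f + orlicz_norm M Phi g))"
proof -
  interpret orl Phi k
    using phi_props[OF assms(1)] assms(2,3) by unfold_locales auto
  show ?thesis unfolding norm_eq using zero homog tri by blast
qed

end
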